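(* A nonzero finitely generated $\mathbb{Z}$-module is not isomorphic to the inverse limit of any inverse system, indexed by a countable upward directed poset, of injective $\mathbb{Z}$-modules and surjective homomorphisms.
   Context: For $\mathbb{Z}$-modules, injective is equivalent to divisible. *)

theory Defs
  imports "HOL-Algebra.Algebra" "HOL-Library.Countable_Set"
begin

text \<open>Z-modules are rendered as commutative groups (HOL-Algebra).  An injective
  Z-module is rendered as a divisible abelian group (injective = divisible for Z-modules).\<close>

definition divisible_group :: "('a, 'm) monoid_scheme \<Rightarrow> bool" where
  "divisible_group E \<longleftrightarrow> comm_group E \<and>
     (\<forall>x\<in>carrier E. \<forall>n::nat. n > 0 \<longrightarrow> (\<exists>y\<in>carrier E. y [^]\<^bsub>E\<^esub> n = x))"

definition finitely_generated_group :: "('a, 'm) monoid_scheme \<Rightarrow> bool" where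
  "finitely_generated_group G \<longleftrightarrow>
     (\<exists>S. finite S \<and> S \<subseteq> carrier G \<and> generate G S = carrier G)"

definition inverse_system ::
  "'i set \<Rightarrow> ('i \<Rightarrow> 'i \<Rightarrow> bool) \<Rightarrow> ('i \<Rightarrow> 'a monoid) \<Rightarrow> ('i \<Rightarrow> 'i \<Rightarrow> 'a \<Rightarrow> 'a) \<Rightarrow> bool" where
  "inverse_system I R A f \<longleftrightarrow>
     (\<forall>i\<in>I. comm_group (A i)) \<and>
     (\<forall>i\<in>I. \<forall>j\<in>I. R i j \<longrightarrow> f i j \<in> hom (A j) (A i)) \<and>
     (\<forall>i\<in>I. \<forall>x\<in>carrier (A i). f i i x = x) \<and>
     (\<forall>i\<in>I. \<forall>j\<in>I. \<forall>k\<in>I. R i j \<longrightarrow> R j k \<longrightarrow>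
        (\<forall>x\<in>carrier (A k). f i j (f j k x) = f i k x))"

definition countable_directed_poset :: "'i set \<Rightarrow> ('i \<Rightarrow> 'i \<Rightarrow> bool) \<Rightarrow> bool" where
  "countable_directed_poset I R \<longleftrightarrow>
     countable I \<and>
     (\<forall>i\<in>I. R i i) \<and>
     (\<forall>i\<in>I. \<forall>j\<in>I. R i j \<longrightarrow> R j i \<longrightarrow> i = j) \<and>
     (\<forall>i\<in>I. \<forall>j\<in>I. \<forall>k\<in>I. R i j \<longrightarrow> R j k \<longrightarrow> R i k) \<and>
     (\<forall>i\<in>I. \<forall>j\<in>I. \<exists>k\<in>I. R i k \<and> R j k)"

definition inverse_limit ::
  "'i set \<Rightarrow> ('i \<Rightarrow> 'i \<Rightarrow> bool) \<Rightarrow> ('i \<Rightarrow> 'a monoid) \<Rightarrow> ('i \<Rightarrow> 'i \<Rightarrow> 'a \<Rightarrow> 'a) \<Rightarrow> ('i \<Rightarrow> 'a) monoid" where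
  "inverse_limit I R A f =
     \<lparr> partial_object.carrier = {x. (\<forall>i\<in>I. x i \<in> carrier (A i)) \<and> (\<forall>i. i \<notin> I \<longrightarrow> x i = undefined) \<and>
                     (\<forall>i\<in>I. \<forall>j\<in>I. R i j \<longrightarrow> f i j (x j) = x i)},
       monoid.mult = (\<lambda>x y. \<lambda>i. if i \<in> I then x i \<otimes>\<^bsub>A i\<^esub> y i else undefined),
       monoid.one = (\<lambda>i. if i \<in> I then \<one>\<^bsub>A i\<^esub> else undefined) \<rparr>"

end

theory Submission
  imports Defs
begin

lemma (in comm_group) ext_subgroup:
  assumes "subgroup K G" "g \<in> carrier G"
  shows "subgroup {k \<otimes> g [^] (a::int) | k a. k \<in> K} G"
proof (rule subgroupI)
  have Kc: "K \<subseteq> carrier G" using assms(1) subgroup.subset by blast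
  show "{k \<otimes> g [^] (a::int) | k a. k \<in> K} \<subseteq> carrier G" using Kc assms(2) by auto
  show "{k \<otimes> g [^] (a::int) | k a. k \<in> K} \<noteq> {}" using subgroup.one_closed[OF assms(1)] by blast
  fix x assume "x \<in> {k \<otimes> g [^] (a::int) | k a. k \<in> K}"
  then obtain k a where x: "x = k \<otimes> g [^] (a::int)" "k \<in> K" by blast
  have "inv x = inv k \<otimes> g [^] (-a)" using x Kc assms(2) by (auto simp: inv_mult int_pow_neg)
  then show "inv x \<in> {k \<otimes> g [^] (a::int) | k a. k \<in> K}"
    using x(2) subgroup.m_inv_closed[OF assms(1)] by blast
  fix y assume "y \<in> {k \<otimes> g [^] (a::int) | k a. k \<in> K}"
  then obtain l b where y: "y = l \<otimes> g [^] (b::int)" "l \<in> K" by blast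
  have kc: "k \<in> carrier G" "l \<in> carrier G" using x y Kc by auto
  have "x \<otimes> y = (k \<otimes> l) \<otimes> g [^] (a + b)" using x y kc assms(2)
    by (simp add: int_pow_mult m_ac)
  then show "x \<otimes> y \<in> {k \<otimes> g [^] (a::int) | k a. k \<in> K}"
    using x(2) y(2) subgroup.m_closed[OF assms(1)] by blast
qed

lemma (in comm_group) generate_insert:
  assumes "S \<subseteq> carrier G" "g \<in> carrier G"
  shows "generate G (insert g S) = {k \<otimes> g [^] (a::int) | k a. k \<in> generate G S}"
proof
  have sg: "subgroup (generate G S) G" by (rule generate_is_subgroup[OF assms(1)])
  have "insert g S \<subseteq> {k \<otimes> g [^] (a::int) | k a. k \<in> generate G S}"
  proof
    fix x assume "x \<in> insert g S"
    then show "x \<in> {k \<otimes> g [^] (a::int) | k a. k \<in> generate G S}"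
    proof
      assume "x = g"
      then have "x = \<one> \<otimes> g [^] (1::int)" using assms by simp
      then show ?thesis using subgroup.one_closed[OF sg] by blast
    next
      assume "x \<in> S"
      then have "x = x \<otimes> g [^] (0::int)" using assms by auto
      then show ?thesis using \<open>x \<in> S\<close> generate.incl[of x S G] by blast
    qed
  qed
  then show "generate G (insert g S) \<subseteq> {k \<otimes> g [^] (a::int) | k a. k \<in> generate G S}"
    using generate_subgroup_incl ext_subgroup[OF sg assms(2)] by blast
next
  have sg2: "subgroup (generate G (insert g S)) G" by (rule generate_is_subgroup) (use assms in auto)
  show "{k \<otimes> g [^] (a::int) | k a. k \<in> generate G S} \<subseteq> generate G (insert g S)"
  proof
    fix x assume "x \<in> {k \<otimes> g [^] (a::int) | k a. k \<in> generate G S}"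
    then obtain k a where x: "x = k \<otimes> g [^] (a::int)" "k \<in> generate G S" by blast
    have "k \<in> generate G (insert g S)" using x(2) mono_generate[of S "insert g S"] by blast
    moreover have "g [^] a \<in> generate G (insert g S)"
      using subgroup_int_pow_closed[OF sg2] generate.incl[of g "insert g S" G] by blast
    ultimately show "x \<in> generate G (insert g S)" using x(1) subgroup.m_closed[OF sg2] by blast
  qed
qed

lemma (in comm_group) fg_claim:
  assumes "finite S"
  shows "S \<subseteq> carrier G \<Longrightarrow> subgroup N G \<Longrightarrow>
    (\<forall>n::nat. n > 0 \<longrightarrow> (\<forall>x\<in>generate G S. \<exists>y\<in>generate G S. \<exists>z\<in>N. x = y [^] n \<otimes> z)) \<Longrightarrow>
    \<exists>d::nat. d > 0 \<and> (\<forall>x\<in>generate G S. x [^] d \<in> N)"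
  using assms
proof (induction S arbitrary: N rule: finite_induct)
  case empty
  have "generate G {} \<subseteq> N" using generate_subgroup_incl[OF _ empty(2)] by blast
  moreover have "\<And>x. x \<in> N \<Longrightarrow> x [^] (1::nat) = x" using subgroup.subset[OF empty(2)] by auto
  ultimately show ?case by (intro exI[of _ 1]) auto
next
  case (insert g S)
  have gc: "g \<in> carrier G" and Sc: "S \<subseteq> carrier G" using insert.prems by auto
  have Nc: "N \<subseteq> carrier G" using subgroup.subset[OF insert.prems(2)] .
  have HC: "generate G S \<subseteq> carrier G" using generate_incl[OF Sc] .
  have H': "generate G (insert g S) = {k \<otimes> g [^] (a::int) | k a. k \<in> generate G S}"
    using generate_insert[OF Sc gc] .
  define N' where "N' = {k \<otimes> g [^] (a::int) | k a. k \<in> N}"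
  have sgN': "subgroup N' G" unfolding N'_def by (rule ext_subgroup[OF insert.prems(2) gc])
  have hypH: "\<forall>n::nat. n > 0 \<longrightarrow> (\<forall>x\<in>generate G S. \<exists>y\<in>generate G S. \<exists>z\<in>N'. x = y [^] n \<otimes> z)"
  proof (intro allI impI ballI)
    fix n :: nat and x assume n: "n > 0" and x: "x \<in> generate G S"
    have "x \<in> generate G (insert g S)" using x mono_generate[of S "insert g S"] by blast
    then obtain y z where y: "y \<in> generate G (insert g S)" and z: "z \<in> N" and xe: "x = y [^] n \<otimes> z"
      using insert.prems(3) n by blast
    obtain y0 a where y0: "y0 \<in> generate G S" and ye: "y = y0 \<otimes> g [^] (a::int)" using y H' by blast
    have y0c: "y0 \<in> carrier G" using y0 HC by auto
    have zc: "z \<in> carrier G" using z Nc by auto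
    have "y [^] n = y0 [^] n \<otimes> g [^] (a * int n)"
      using ye y0c gc by (simp add: int_pow_distrib int_pow_pow flip: int_pow_int)
    then have "x = y0 [^] n \<otimes> (z \<otimes> g [^] (a * int n))" using xe y0c gc zc by (simp add: m_ac)
    moreover have "z \<otimes> g [^] (a * int n) \<in> N'" unfolding N'_def using z by blast
    ultimately show "\<exists>y\<in>generate G S. \<exists>z\<in>N'. x = y [^] n \<otimes> z" using y0 by blast
  qed
  obtain d :: nat where d: "d > 0" and dH: "\<forall>x\<in>generate G S. x [^] d \<in> N'"
    using insert.IH[OF Sc sgN' hypH] by blast
  have "g \<in> generate G (insert g S)" using generate.incl[of g "insert g S" G] by blast
  then obtain y z where y: "y \<in> generate G (insert g S)" and z: "z \<in> N" and ge: "g = y [^] (2*d) \<otimes> z"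
    using insert.prems(3) d by (metis mult_pos_pos zero_less_numeral)
  obtain y0 a where y0: "y0 \<in> generate G S" and ye: "y = y0 \<otimes> g [^] (a::int)" using y H' by blast
  have y0c: "y0 \<in> carrier G" using y0 HC by auto
  have zc: "z \<in> carrier G" using z Nc by auto
  obtain z1 b where z1: "z1 \<in> N" and y0d: "y0 [^] d = z1 \<otimes> g [^] (b::int)"
    using dH y0 unfolding N'_def by blast
  have z1c: "z1 \<in> carrier G" using z1 Nc by auto
  have "y [^] (2*d) = (y0 [^] d) [^] (2::nat) \<otimes> g [^] (2 * a * int d)"
    using ye y0c gc by (simp add: int_pow_distrib int_pow_pow nat_pow_pow mult_ac flip: int_pow_int)
  also have "\<dots> = z1 [^] (2::nat) \<otimes> g [^] (2 * b + 2 * a * int d)"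
    unfolding y0d using z1c gc
    by (simp add: int_pow_distrib int_pow_pow int_pow_mult m_ac mult.commute flip: int_pow_int)
  finally have yeq: "y [^] (2*d) = z1 [^] (2::nat) \<otimes> g [^] (2 * b + 2 * a * int d)" .
  have g1: "g = (z1 [^] (2::nat) \<otimes> g [^] (2 * b + 2 * a * int d)) \<otimes> z"
    unfolding yeq[symmetric] by (rule ge)
  have "(z1 [^] (2::nat) \<otimes> g [^] (2 * b + 2 * a * int d)) \<otimes> z = (z1 [^] (2::nat) \<otimes> z) \<otimes> g [^] (2 * b + 2 * a * int d)"
    using z1c zc gc by (simp add: m_ac)
  with g1 have g2: "g = (z1 [^] (2::nat) \<otimes> z) \<otimes> g [^] (2 * b + 2 * a * int d)" by simp
  define t where "t = 2 * b + 2 * a * int d"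
  define w where "w = z1 [^] (2::nat) \<otimes> z"
  have wN: "w \<in> N" unfolding w_def using z z1 insert.prems(2)
    by (metis subgroup.m_closed subgroup_int_pow_closed int_pow_int)
  have wc: "w \<in> carrier G" using wN Nc by auto
  have gw: "g = w \<otimes> g [^] t" unfolding w_def t_def using g2 .
  have "g [^] (1 - t) = g \<otimes> inv (g [^] t)" using gc by (simp add: int_pow_diff)
  also have "\<dots> = w" using gw wc gc by (metis inv_solve_right int_pow_closed)
  finally have geN: "g [^] (1 - t) \<in> N" using wN by simp
  define E where "E = nat \<bar>1 - t\<bar>"
  have "\<forall>m::int. 1 - (2 * b + 2 * m) \<noteq> 0" by presburger
  then have tne: "1 - t \<noteq> 0" unfolding t_def by (metis mult.assoc)
  have E0: "E > 0" unfolding E_def using tne by simp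
  have gE: "g [^] (int E) \<in> N"
  proof (cases "1 - t \<ge> 0")
    case True
    then show ?thesis using geN unfolding E_def by simp
  next
    case False
    then have "int E = - (1 - t)" unfolding E_def by simp
    then have "g [^] (int E) = inv (g [^] (1 - t))" using gc int_pow_neg[OF gc, of "1 - t"] by simp
    then show ?thesis using geN subgroup.m_inv_closed[OF insert.prems(2)] by simp
  qed
  show ?case
  proof (intro exI[of _ "d * E"] conjI ballI)
    show "d * E > 0" using d E0 by simp
    fix x assume "x \<in> generate G (insert g S)"
    then obtain k c where k: "k \<in> generate G S" and xe: "x = k \<otimes> g [^] (c::int)" using H' by blast
    have kc: "k \<in> carrier G" using k HC by auto
    obtain z2 b2 where z2: "z2 \<in> N" and kd: "k [^] d = z2 \<otimes> g [^] (b2::int)"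
      using dH k unfolding N'_def by blast
    have z2c: "z2 \<in> carrier G" using z2 Nc by auto
    have "x [^] (d * E) = (k [^] d) [^] (int E) \<otimes> g [^] (c * int d * int E)"
      using xe kc gc by (simp add: int_pow_distrib int_pow_pow nat_pow_pow mult_ac flip: int_pow_int)
    also have "\<dots> = z2 [^] (int E) \<otimes> ((g [^] (int E)) [^] b2 \<otimes> (g [^] (int E)) [^] (c * int d))"
      unfolding kd using z2c gc
      by (simp add: int_pow_distrib int_pow_pow m_ac mult.commute mult.left_commute)
    finally show "x [^] (d * E) \<in> N"
      using z2 gE insert.prems(2)
      by (metis subgroup.m_closed subgroup_int_pow_closed)
  qed
qed


lemma fg_div_trivial:
  fixes G (structure)
  assumes "divisible_group G" "finitely_generated_group G"
  shows "carrier G = {\<one>\<^bsub>G\<^esub>}"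
proof -
  interpret comm_group G using assms(1) unfolding divisible_group_def by blast
  obtain S where S: "finite S" "S \<subseteq> carrier G" "generate G S = carrier G"
    using assms(2) unfolding finitely_generated_group_def by blast
  have div: "\<forall>x\<in>carrier G. \<forall>n::nat. n > 0 \<longrightarrow> (\<exists>y\<in>carrier G. y [^] n = x)"
    using assms(1) unfolding divisible_group_def by blast
  have hyp: "\<forall>n::nat. n > 0 \<longrightarrow> (\<forall>x\<in>generate G S. \<exists>y\<in>generate G S. \<exists>z\<in>{\<one>}. x = y [^] n \<otimes> z)"
  proof (intro allI impI ballI)
    fix n :: nat and x assume "n > 0" "x \<in> generate G S"
    then obtain y where "y \<in> carrier G" "y [^] n = x" using div S(3) by blast
    then show "\<exists>y\<in>generate G S. \<exists>z\<in>{\<one>}. x = y [^] n \<otimes> z" using S(3) by auto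
  qed
  obtain d :: nat where d: "d > 0" "\<forall>x\<in>generate G S. x [^] d \<in> {\<one>}"
    using fg_claim[OF S(1) S(2) triv_subgroup hyp] by blast
  show ?thesis
  proof
    show "carrier G \<subseteq> {\<one>}"
    proof
      fix x assume "x \<in> carrier G"
      then obtain y where "y \<in> carrier G" "y [^] d = x" using div d(1) by blast
      then show "x \<in> {\<one>}" using d(2) S(3) by auto
    qed
  qed auto
qed

lemma proj_surj:
  assumes P: "countable_directed_poset I R" and S: "inverse_system I R A f"
    and sur: "\<forall>i\<in>I. \<forall>j\<in>I. R i j \<longrightarrow> f i j ` carrier (A j) = carrier (A i)"
    and i: "i \<in> I" and a: "a \<in> carrier (A i)"
  shows "\<exists>x\<in>carrier (inverse_limit I R A f). x i = a"
proof -
  have cI: "countable I" using P unfolding countable_directed_poset_def by blast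
  have refl: "\<forall>i\<in>I. R i i" using P unfolding countable_directed_poset_def by blast
  have trans: "\<forall>i\<in>I. \<forall>j\<in>I. \<forall>k\<in>I. R i j \<longrightarrow> R j k \<longrightarrow> R i k"
    using P unfolding countable_directed_poset_def by blast
  have dir: "\<forall>i\<in>I. \<forall>j\<in>I. \<exists>k\<in>I. R i k \<and> R j k"
    using P unfolding countable_directed_poset_def by blast
  have hom: "\<forall>i\<in>I. \<forall>j\<in>I. R i j \<longrightarrow> f i j \<in> hom (A j) (A i)"
    using S unfolding inverse_system_def by blast
  have fid: "\<forall>i\<in>I. \<forall>x\<in>carrier (A i). f i i x = x"
    using S unfolding inverse_system_def by blast
  have comp: "\<forall>i\<in>I. \<forall>j\<in>I. \<forall>k\<in>I. R i j \<longrightarrow> R j k \<longrightarrow>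
        (\<forall>x\<in>carrier (A k). f i j (f j k x) = f i k x)"
    using S unfolding inverse_system_def by blast
  have Ine: "I \<noteq> {}" using i by auto
  define e where "e = from_nat_into I"
  have eI: "\<And>n. e n \<in> I" unfolding e_def using from_nat_into[OF Ine] by blast
  have erange: "\<And>j. j \<in> I \<Longrightarrow> \<exists>n. e n = j"
    unfolding e_def using subset_range_from_nat_into[OF cI] by blast
  define c where "c = rec_nat i (\<lambda>n k. SOME k'. k' \<in> I \<and> R k k' \<and> R (e n) k')"
  have c0: "c 0 = i" unfolding c_def by simp
  have cS: "\<And>n. c (Suc n) = (SOME k'. k' \<in> I \<and> R (c n) k' \<and> R (e n) k')" unfolding c_def by simp
  have cstep: "\<And>n. c n \<in> I \<Longrightarrow> c (Suc n) \<in> I \<and> R (c n) (c (Suc n)) \<and> R (e n) (c (Suc n))"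
  proof -
    fix n assume cn: "c n \<in> I"
    have ex: "\<exists>k'. k' \<in> I \<and> R (c n) k' \<and> R (e n) k'" using dir cn eI[of n] by blast
    show "c (Suc n) \<in> I \<and> R (c n) (c (Suc n)) \<and> R (e n) (c (Suc n))"
      unfolding cS[of n] by (rule someI_ex[OF ex])
  qed
  have cI': "\<And>n. c n \<in> I"
  proof -
    fix n show "c n \<in> I"
    proof (induction n)
      case 0 show ?case unfolding c0 by (rule i)
    next
      case (Suc n) then show ?case using cstep by blast
    qed
  qed
  have cprop: "\<And>n. c n \<in> I \<and> c (Suc n) \<in> I \<and> R (c n) (c (Suc n)) \<and> R (e n) (c (Suc n))"
    using cstep cI' by blast
  have cmono: "\<And>m n. m \<le> n \<Longrightarrow> R (c m) (c n)"
  proof -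
    fix m n :: nat assume "m \<le> n"
    then show "R (c m) (c n)"
    proof (induction n rule: dec_induct)
      case base then show ?case using refl cI' by blast
    next
      case (step n) then show ?case using trans cI' cprop by blast
    qed
  qed
  have cof: "\<And>j. j \<in> I \<Longrightarrow> \<exists>n. R j (c n)"
  proof -
    fix j assume "j \<in> I"
    then obtain n where "e n = j" using erange by blast
    then show "\<exists>n. R j (c n)" using cprop[of n] by blast
  qed
  define s where "s = rec_nat a (\<lambda>n b. SOME b'. b' \<in> carrier (A (c (Suc n))) \<and> f (c n) (c (Suc n)) b' = b)"
  have s0: "s 0 = a" unfolding s_def by simp
  have sS: "\<And>n. s (Suc n) = (SOME b'. b' \<in> carrier (A (c (Suc n))) \<and> f (c n) (c (Suc n)) b' = s n)"
    unfolding s_def by simp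
  have sstep: "\<And>n. s n \<in> carrier (A (c n)) \<Longrightarrow> s (Suc n) \<in> carrier (A (c (Suc n))) \<and> f (c n) (c (Suc n)) (s (Suc n)) = s n"
  proof -
    fix n assume sn: "s n \<in> carrier (A (c n))"
    have F: "f (c n) (c (Suc n)) ` carrier (A (c (Suc n))) = carrier (A (c n))"
      using sur cI'[of n] cI'[of "Suc n"] cprop[of n] by blast
    have "s n \<in> f (c n) (c (Suc n)) ` carrier (A (c (Suc n)))" using sn by (simp only: F)
    then obtain b' where "b' \<in> carrier (A (c (Suc n)))" "s n = f (c n) (c (Suc n)) b'" by (rule imageE)
    then have ex: "\<exists>b'. b' \<in> carrier (A (c (Suc n))) \<and> f (c n) (c (Suc n)) b' = s n" by metis
    show "s (Suc n) \<in> carrier (A (c (Suc n))) \<and> f (c n) (c (Suc n)) (s (Suc n)) = s n"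
      unfolding sS[of n] by (rule someI_ex[OF ex])
  qed
  have sc: "\<And>n. s n \<in> carrier (A (c n))"
  proof -
    fix n show "s n \<in> carrier (A (c n))"
    proof (induction n)
      case 0 show ?case unfolding c0 s0 by (rule a)
    next
      case (Suc n) then show ?case using sstep by blast
    qed
  qed
  have sprop: "\<And>n. s n \<in> carrier (A (c n)) \<and> s (Suc n) \<in> carrier (A (c (Suc n))) \<and> f (c n) (c (Suc n)) (s (Suc n)) = s n"
    using sstep sc by blast
  have scompat: "\<And>m n. m \<le> n \<Longrightarrow> f (c m) (c n) (s n) = s m"
  proof -
    fix m n :: nat assume "m \<le> n"
    then show "f (c m) (c n) (s n) = s m"
    proof (induction n rule: dec_induct)
      case base then show ?case using fid cI' sprop by blast
    next
      case (step n)
      have "f (c m) (c (Suc n)) (s (Suc n)) = f (c m) (c n) (f (c n) (c (Suc n)) (s (Suc n)))"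
        using comp[rule_format, OF cI'[of m] cI'[of n] cI'[of "Suc n"] cmono[OF step(1)] conjunct1[OF conjunct2[OF conjunct2[OF cprop[of n]]]] conjunct1[OF conjunct2[OF sprop[of n]]]] by simp
      then show ?case using sprop step(3) by simp
    qed
  qed
  have indep: "\<And>j n n'. j \<in> I \<Longrightarrow> R j (c n) \<Longrightarrow> R j (c n') \<Longrightarrow> n \<le> n' \<Longrightarrow>
      f j (c n') (s n') = f j (c n) (s n)"
  proof -
    fix j n n' assume j: "j \<in> I" "R j (c n)" "R j (c n')" "n \<le> n'"
    have "f j (c n') (s n') = f j (c n) (f (c n) (c n') (s n'))"
      using comp[rule_format, OF j(1) cI'[of n] cI'[of n'] j(2) cmono[OF j(4)] conjunct1[OF sprop[of n']]] by simp
    then show "f j (c n') (s n') = f j (c n) (s n)" using scompat[OF j(4)] by simp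
  qed
  have indep2: "\<And>j n n'. j \<in> I \<Longrightarrow> R j (c n) \<Longrightarrow> R j (c n') \<Longrightarrow>
      f j (c n') (s n') = f j (c n) (s n)"
  proof -
    fix j n n' assume "j \<in> I" "R j (c n)" "R j (c n')"
    then show "f j (c n') (s n') = f j (c n) (s n)"
      using indep[of j n n'] indep[of j n' n] nat_le_linear[of n n'] by auto
  qed
  define x where "x = (\<lambda>j. if j \<in> I then f j (c (SOME n. R j (c n))) (s (SOME n. R j (c n))) else undefined)"
  have xval: "\<And>j n. j \<in> I \<Longrightarrow> R j (c n) \<Longrightarrow> x j = f j (c n) (s n)"
  proof -
    fix j n assume j: "j \<in> I" "R j (c n)"
    have sm: "R j (c (SOME n. R j (c n)))" using j by (metis someI_ex)
    show "x j = f j (c n) (s n)" unfolding x_def using j indep2[OF j(1) j(2) sm] by simp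
  qed
  have xcar: "x \<in> carrier (inverse_limit I R A f)"
    unfolding inverse_limit_def
  proof (simp, intro conjI ballI allI impI)
    fix j assume j: "j \<in> I"
    obtain n where n: "R j (c n)" using cof j by blast
    have hj: "f j (c n) \<in> hom (A (c n)) (A j)" using hom j cI'[of n] n by blast
    show "x j \<in> carrier (A j)" unfolding xval[OF j n] by (rule hom_in_carrier[OF hj sc[of n]])
  next
    fix j assume jn: "j \<notin> I" show "x j = undefined" unfolding x_def using jn by (rule if_not_P)
  next
    fix j k assume jk: "j \<in> I" "k \<in> I" "R j k"
    obtain n where n: "R k (c n)" using cof jk by blast
    have jn: "R j (c n)" using trans jk n cI' by blast
    have "f j k (x k) = f j k (f k (c n) (s n))" using xval[OF jk(2) n] by simp
    also have "\<dots> = f j (c n) (s n)"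
      using comp[rule_format, OF jk(1) jk(2) cI'[of n] jk(3) n conjunct1[OF sprop[of n]]] .
    also have "\<dots> = x j" using xval[OF jk(1) jn] by simp
    finally show "f j k (x k) = x j" .
  qed
  have ri: "R i (c 0)" unfolding c0 using refl i by blast
  have "x i = f i (c 0) (s 0)" by (rule xval[OF i ri])
  also have "\<dots> = a" unfolding c0 s0 using fid i a by blast
  finally show ?thesis using xcar by blast
qed

theorem mainTheorem9:
  fixes M :: "'b monoid"
    and I :: "'i set" and R :: "'i \<Rightarrow> 'i \<Rightarrow> bool"
    and A :: "'i \<Rightarrow> 'a monoid" and f :: "'i \<Rightarrow> 'i \<Rightarrow> 'a \<Rightarrow> 'a"
  assumes "comm_group M"
    and "finitely_generated_group M"
    and "carrier M \<noteq> {\<one>\<^bsub>M\<^esub>}"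
    and "countable_directed_poset I R"
    and "inverse_system I R A f"
    and "\<forall>i\<in>I. divisible_group (A i)"
    and "\<forall>i\<in>I. \<forall>j\<in>I. R i j \<longrightarrow> f i j ` carrier (A j) = carrier (A i)"
  shows "\<not> (M \<cong> inverse_limit I R A f)"
proof
  assume "M \<cong> inverse_limit I R A f"
  then obtain h where h: "h \<in> iso M (inverse_limit I R A f)" unfolding is_iso_def by blast
  define L where "L = inverse_limit I R A f"
  have hhom: "h \<in> hom M L" using h unfolding iso_def L_def by blast
  have hbij: "bij_betw h (carrier M) (carrier L)" using h unfolding iso_def L_def by blast
  interpret M: comm_group M by fact
  obtain S where S: "finite S" "S \<subseteq> carrier M" "generate M S = carrier M"
    using assms(2) unfolding finitely_generated_group_def by blast
  have Lcar: "\<And>x. x \<in> carrier L \<longleftrightarrow> (\<forall>i\<in>I. x i \<in> carrier (A i)) \<and> (\<forall>i. i \<notin> I \<longrightarrow> x i = undefined) \<and>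
                     (\<forall>i\<in>I. \<forall>j\<in>I. R i j \<longrightarrow> f i j (x j) = x i)"
    unfolding L_def inverse_limit_def by simp
  have Lmult: "\<And>x y i. i \<in> I \<Longrightarrow> (x \<otimes>\<^bsub>L\<^esub> y) i = x i \<otimes>\<^bsub>A i\<^esub> y i"
    unfolding L_def inverse_limit_def by simp
  have hc: "\<And>m. m \<in> carrier M \<Longrightarrow> h m \<in> carrier L" by (rule bij_betw_apply[OF hbij])
  have triv: "\<And>i. i \<in> I \<Longrightarrow> carrier (A i) = {\<one>\<^bsub>A i\<^esub>}"
  proof -
    fix i assume i: "i \<in> I"
    have cg: "comm_group (A i)" using assms(5) i unfolding inverse_system_def by blast
    have grp: "group (A i)" using cg by (rule comm_group.axioms(2))
    define g where "g = (\<lambda>m. h m i)"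
    have ghom: "g \<in> hom M (A i)"
    proof (rule homI)
      fix m assume m: "m \<in> carrier M"
      have "\<forall>i\<in>I. h m i \<in> carrier (A i)" using Lcar[THEN iffD1, OF hc[OF m]] by (rule conjunct1)
      then show "g m \<in> carrier (A i)" unfolding g_def using i by blast
    next
      fix m n assume "m \<in> carrier M" "n \<in> carrier M"
      then have "h (m \<otimes>\<^bsub>M\<^esub> n) = h m \<otimes>\<^bsub>L\<^esub> h n" using hhom by (simp add: hom_mult)
      then show "g (m \<otimes>\<^bsub>M\<^esub> n) = g m \<otimes>\<^bsub>A i\<^esub> g n" unfolding g_def using Lmult i by simp
    qed
    have gha: "group_hom_axioms M (A i) g" unfolding group_hom_axioms_def by (rule ghom)
    interpret gh: group_hom M "A i" g by (rule group_hom.intro[OF M.is_group grp gha])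
    have gsurj: "g ` carrier M = carrier (A i)"
    proof
      show "g ` carrier M \<subseteq> carrier (A i)" using hom_in_carrier[OF ghom] by blast
      show "carrier (A i) \<subseteq> g ` carrier M"
      proof
        fix a assume "a \<in> carrier (A i)"
        then obtain x where x: "x \<in> carrier L" "x i = a"
          using proj_surj[OF assms(4) assms(5) assms(7) i] unfolding L_def by blast
        have "x \<in> h ` carrier M" using x(1) by (simp only: bij_betw_imp_surj_on[OF hbij])
        then obtain m where "m \<in> carrier M" "x = h m" by (rule imageE)
        then have "m \<in> carrier M" "h m = x" by simp_all
        then show "a \<in> g ` carrier M" unfolding g_def using x by blast
      qed
    qed
    have "generate (A i) (g ` S) = carrier (A i)"
      using gh.generate_img[OF S(2)] S(3) gsurj by simp
    moreover have "finite (g ` S)" using S(1) by (rule finite_imageI)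
    moreover have "g ` S \<subseteq> carrier (A i)" using S(2) gsurj by (auto simp del: image_subset_iff)
    ultimately have "finitely_generated_group (A i)"
      unfolding finitely_generated_group_def by blast
    moreover have "divisible_group (A i)" using assms(6) i by (rule bspec)
    ultimately show "carrier (A i) = {\<one>\<^bsub>A i\<^esub>}" using fg_div_trivial by blast
  qed
  define u where "u = (\<lambda>j. if j \<in> I then \<one>\<^bsub>A j\<^esub> else undefined)"
  have Lu: "\<And>x. x \<in> carrier L \<Longrightarrow> x = u"
  proof
    fix x j assume "x \<in> carrier L"
    then have xL: "(\<forall>i\<in>I. x i \<in> carrier (A i)) \<and> (\<forall>i. i \<notin> I \<longrightarrow> x i = undefined)"
      using Lcar[of x] by blast
    show "x j = u j"
    proof (cases "j \<in> I")
      case True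
      then have "x j \<in> carrier (A j)" using xL by blast
      then have "x j = \<one>\<^bsub>A j\<^esub>" using triv[OF True] by blast
      then show ?thesis unfolding u_def using True by simp
    next
      case False
      then have "x j = undefined" using xL by blast
      then show ?thesis unfolding u_def using False by simp
    qed
  qed
  obtain m where m: "m \<in> carrier M" "m \<noteq> \<one>\<^bsub>M\<^esub>" using assms(3) M.one_closed by blast
  have "h m = h \<one>\<^bsub>M\<^esub>" using Lu[OF hc[OF m(1)]] Lu[OF hc[OF M.one_closed]] by simp
  then have "m = \<one>\<^bsub>M\<^esub>" using inj_onD[OF bij_betw_imp_inj_on[OF hbij] _ m(1) M.one_closed] by blast
  then show False using m(2) by contradiction
qed

end
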